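(* Let $m\geq 1$, let $x_1,\ldots,x_m\in\{0,1\}$ with $x_j\neq x_{j+1}$ for $1\le j<m$ and $x_m=1$, and let $k_1,\ldots,k_m$ be positive integers with $k_1\geq 2$. Let $G$ be the threshold graph generated by the binary sequence $x_1^{k_1},x_2^{k_2},\ldots,x_m^{k_m}$, and let $n=k_1+\cdots+k_m$ be its number of vertices. Then \[ \operatorname{cdim}(G)=\begin{cases} n-m & \text{if } k_m>1,\\ n-m+1 & \text{if } k_m=1.\end{cases} \]
   Context: All graphs are finite, simple, undirected and nonempty. A threshold graph on $n$ vertices is generated by a binary sequence $y_1,\ldots,y_n\in\{0,1\}$: starting from the empty graph, in step $i$ one adds a new vertex which is isolated if $y_i=0$ and adjacent to all previously added vertices if $y_i=1$. The notation $x_1^{k_1},\ldots,x_m^{k_m}$ denotes the binary sequence consisting of $k_1$ copies of $x_1$, followed by $k_2$ copies of $x_2$, etc. For distinct vertices $v,w$, $\kappa(v,w)$ is the maximum number of internally vertex-disjoint $v$–$w$ paths (an edge $vw$ counts as one such path); $\kappa(v,v)=\infty$. For an ordered vertex set $W=(w_1,\ldots,w_k)$, $r_G(v,W)=[\kappa(v,w_1),\ldots,\kappa(v,w_k)]$. $W$ is resolving if $r_G(v_1,W)=r_G(v_2,W)$ implies $v_1=v_2$. The connectivity dimension $\operatorname{cdim}(G)$ is the minimum cardinality of a resolving set. *)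

theory Defs
  imports Main "HOL-Library.Extended_Nat"
begin

text \<open>A finite simple graph is given by a vertex set V and a symmetric irreflexive
adjacency relation adj.\<close>

definition is_path :: "'a set \<Rightarrow> ('a \<Rightarrow> 'a \<Rightarrow> bool) \<Rightarrow> 'a \<Rightarrow> 'a \<Rightarrow> 'a list \<Rightarrow> bool" where
  "is_path V adj v w p \<longleftrightarrow> p \<noteq> [] \<and> distinct p \<and> set p \<subseteq> V \<and> hd p = v \<and> last p = w
     \<and> (\<forall>i. Suc i < length p \<longrightarrow> adj (p ! i) (p ! Suc i))"

definition interior :: "'a list \<Rightarrow> 'a set" where
  "interior p = set (butlast (tl p))"

definition disjoint_path_family :: "'a set \<Rightarrow> ('a \<Rightarrow> 'a \<Rightarrow> bool) \<Rightarrow> 'a \<Rightarrow> 'a \<Rightarrow> 'a list set \<Rightarrow> bool" where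
  "disjoint_path_family V adj v w P \<longleftrightarrow> (\<forall>p\<in>P. is_path V adj v w p)
     \<and> (\<forall>p\<in>P. \<forall>q\<in>P. p \<noteq> q \<longrightarrow> interior p \<inter> interior q = {})"

definition kappa :: "'a set \<Rightarrow> ('a \<Rightarrow> 'a \<Rightarrow> bool) \<Rightarrow> 'a \<Rightarrow> 'a \<Rightarrow> enat" where
  "kappa V adj v w = (if v = w then \<infinity>
     else enat (Max {card P | P. finite P \<and> disjoint_path_family V adj v w P}))"

definition rep :: "'a set \<Rightarrow> ('a \<Rightarrow> 'a \<Rightarrow> bool) \<Rightarrow> 'a \<Rightarrow> 'a list \<Rightarrow> enat list" where
  "rep V adj v W = map (kappa V adj v) W"

definition resolving :: "'a set \<Rightarrow> ('a \<Rightarrow> 'a \<Rightarrow> bool) \<Rightarrow> 'a list \<Rightarrow> bool" where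
  "resolving V adj W \<longleftrightarrow> set W \<subseteq> V \<and>
     (\<forall>v1\<in>V. \<forall>v2\<in>V. rep V adj v1 W = rep V adj v2 W \<longrightarrow> v1 = v2)"

definition cdim :: "'a set \<Rightarrow> ('a \<Rightarrow> 'a \<Rightarrow> bool) \<Rightarrow> nat" where
  "cdim V adj = (LEAST c. \<exists>W. distinct W \<and> length W = c \<and> resolving V adj W)"

text \<open>Threshold graph generated by a 0/1 sequence ys (vertex i, 0-indexed, is added in step i+1).\<close>
definition thr_vertices :: "nat list \<Rightarrow> nat set" where
  "thr_vertices ys = {..<length ys}"

definition thr_adj :: "nat list \<Rightarrow> nat \<Rightarrow> nat \<Rightarrow> bool" where
  "thr_adj ys i j \<longleftrightarrow> i \<noteq> j \<and> i < length ys \<and> j < length ys \<and> ys ! (max i j) = 1"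

definition block_seq :: "nat \<Rightarrow> (nat \<Rightarrow> nat) \<Rightarrow> (nat \<Rightarrow> nat) \<Rightarrow> nat list" where
  "block_seq m x k = concat (map (\<lambda>j. replicate (k j) (x j)) [1..<Suc m])"

end

theory Submission
  imports Defs
begin


definition nbrs :: "'a set \<Rightarrow> ('a \<Rightarrow> 'a \<Rightarrow> bool) \<Rightarrow> 'a \<Rightarrow> 'a set" where
  "nbrs V adj v = {z\<in>V. adj v z}"

lemma interior_nth1:
  assumes "length p \<ge> 3" shows "p ! 1 \<in> interior p"
proof -
  obtain a b c r where "p = a # b # c # r" using assms
    by (cases p; cases "tl p"; cases "tl (tl p)") auto
  then show ?thesis by (simp add: interior_def)
qed

lemma path_len2:
  assumes "is_path V adj v w p" "v \<noteq> w" shows "length p \<ge> 2"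
proof (rule ccontr)
  assume "\<not> 2 \<le> length p"
  moreover have "length p > 0" using assms by (simp add: is_path_def)
  ultimately have "length p = 1" by linarith
  then obtain a where "p = [a]" by (cases p) auto
  with assms show False by (auto simp: is_path_def)
qed

lemma card_family_le:
  assumes fin: "finite V" and vw: "v \<noteq> w" and D: "disjoint_path_family V adj v w P"
  shows "card P \<le> card (nbrs V adj v)"
proof -
  have pth: "\<And>p. p \<in> P \<Longrightarrow> is_path V adj v w p" using D by (simp add: disjoint_path_family_def)
  have map: "(\<lambda>p. p ! 1) ` P \<subseteq> nbrs V adj v"
  proof
    fix y assume "y \<in> (\<lambda>p. p ! 1) ` P"
    then obtain p where p: "p \<in> P" "y = p ! 1" by auto
    have ip: "is_path V adj v w p" using pth p by auto
    have l: "length p \<ge> 2" using path_len2[OF ip vw] .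
    have "p ! 0 = v" using ip by (auto simp: is_path_def hd_conv_nth)
    moreover have "adj (p ! 0) (p ! Suc 0)" using ip l by (auto simp: is_path_def)
    moreover have "p ! 1 \<in> V" using ip l by (auto simp: is_path_def)
    ultimately show "y \<in> nbrs V adj v" using p by (simp add: nbrs_def)
  qed
  have len2w: "p ! 1 = w \<Longrightarrow> p = [v, w]" if "p \<in> P" for p
  proof -
    have ip: "is_path V adj v w p" using pth that by auto
    have l: "length p \<ge> 2" using path_len2[OF ip vw] .
    assume a: "p ! 1 = w"
    have lw: "p ! (length p - 1) = w" using ip by (auto simp: is_path_def last_conv_nth)
    have "distinct p" using ip by (auto simp: is_path_def)
    then have "1 = length p - 1" using nth_eq_iff_index_eq[of p 1 "length p - 1"] a lw l by simp
    then have "length p = 2" by simp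
    then obtain a b where "p = [a, b]"
      by (cases p; cases "tl p") auto
    moreover have "hd p = v" using ip by (auto simp: is_path_def)
    ultimately show "p = [v, w]" using a by simp
  qed
  have int: "p ! 1 \<noteq> w \<Longrightarrow> p ! 1 \<in> interior p" if "p \<in> P" for p
  proof -
    have ip: "is_path V adj v w p" using pth that by auto
    have l: "length p \<ge> 2" using path_len2[OF ip vw] .
    assume a: "p ! 1 \<noteq> w"
    have lw: "p ! (length p - 1) = w" using ip by (auto simp: is_path_def last_conv_nth)
    have "length p \<noteq> 2" using a lw by auto
    then have "length p \<ge> 3" using l by simp
    then show ?thesis by (rule interior_nth1)
  qed
  have inj: "inj_on (\<lambda>p. p ! 1) P"
  proof (rule inj_onI)
    fix p q assume pq: "p \<in> P" "q \<in> P" "p ! 1 = q ! 1"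
    show "p = q"
    proof (cases "p ! 1 = w")
      case True then show ?thesis using len2w pq by metis
    next
      case False
      have i1: "p ! 1 \<in> interior p" using int[OF pq(1)] False by blast
      have i2: "p ! 1 \<in> interior q" using int[OF pq(2)] False pq(3) by simp
      from i1 i2 show ?thesis using D pq unfolding disjoint_path_family_def by blast
    qed
  qed
  have "finite (nbrs V adj v)" using fin by (simp add: nbrs_def)
  then show ?thesis using card_inj_on_le[OF inj map] by simp
qed

definition kset where "kset V adj v w = {card P | P. finite P \<and> disjoint_path_family V adj v w P}"

lemma kset_props:
  assumes "finite V" "v \<noteq> w"
  shows "finite (kset V adj v w)" "0 \<in> kset V adj v w" "\<forall>c\<in>kset V adj v w. c \<le> card (nbrs V adj v)"
proof -
  show b: "\<forall>c\<in>kset V adj v w. c \<le> card (nbrs V adj v)"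
    using card_family_le[OF assms] by (auto simp: kset_def)
  then show "finite (kset V adj v w)"
    by (meson finite_nat_set_iff_bounded_le)
  have "disjoint_path_family V adj v w {}" by (simp add: disjoint_path_family_def)
  then show "0 \<in> kset V adj v w" unfolding kset_def by (metis (mono_tags, lifting) card.empty finite.emptyI mem_Collect_eq)
qed

lemma kappa_eq: "v \<noteq> w \<Longrightarrow> kappa V adj v w = enat (Max (kset V adj v w))"
  by (simp add: kappa_def kset_def)

lemma kappa_le:
  assumes "finite V" "v \<noteq> w" shows "kappa V adj v w \<le> enat (card (nbrs V adj v))"
  using kset_props[OF assms] kappa_eq[OF assms(2)] by (metis Max_in empty_iff enat_ord_simps(1))

lemma kappa_ge:
  assumes "finite V" "v \<noteq> w" "finite P" "disjoint_path_family V adj v w P"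
  shows "enat (card P) \<le> kappa V adj v w"
proof -
  have "card P \<in> kset V adj v w" using assms by (auto simp: kset_def)
  then show ?thesis using kset_props[OF assms(1,2)] kappa_eq[OF assms(2)] by simp
qed

lemma kappa_fin: "v \<noteq> w \<Longrightarrow> kappa V adj v w \<noteq> \<infinity>"
  by (simp add: kappa_eq)



lemma interior_rev: "interior (rev p) = interior p"
proof -
  have "tl (rev p) = rev (butlast p)" by (metis butlast_rev rev_rev_ident)
  then have "butlast (tl (rev p)) = rev (tl (butlast p))" by (simp add: butlast_rev)
  then show ?thesis by (simp add: interior_def butlast_tl)
qed

lemma is_path_rev:
  assumes "is_path V adj v w p" "\<And>a b. adj a b \<Longrightarrow> adj b a"
  shows "is_path V adj w v (rev p)"
  unfolding is_path_def
proof (intro conjI allI impI)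
  show "rev p \<noteq> []" "distinct (rev p)" "set (rev p) \<subseteq> V" "hd (rev p) = w" "last (rev p) = v"
    using assms(1) by (auto simp: is_path_def hd_rev last_rev)
  fix i assume i: "Suc i < length (rev p)"
  define j where "j = length p - Suc (Suc i)"
  have "Suc j < length p" "Suc j = length p - Suc i" using i by (auto simp: j_def)
  then have "adj (p ! j) (p ! Suc j)" using assms(1) unfolding is_path_def by blast
  moreover have "rev p ! i = p ! Suc j" "rev p ! Suc i = p ! j"
    using i by (auto simp: rev_nth j_def Suc_diff_Suc)
  ultimately show "adj (rev p ! i) (rev p ! Suc i)" using assms(2) by simp
qed

lemma kset_rev:
  assumes "\<And>a b. adj a b \<Longrightarrow> adj b a"
  shows "kset V adj v w \<subseteq> kset V adj w v"
proof
  fix c assume "c \<in> kset V adj v w"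
  then obtain P where P: "c = card P" "finite P" "disjoint_path_family V adj v w P"
    by (auto simp: kset_def)
  have "disjoint_path_family V adj w v (rev ` P)"
    using P(3) is_path_rev[of V adj v w _, OF _ assms] unfolding disjoint_path_family_def
    by (auto simp: interior_rev)
  moreover have "card (rev ` P) = c" using P by (simp add: card_image)
  ultimately show "c \<in> kset V adj w v" using P(2) unfolding kset_def by blast
qed

lemma kappa_sym:
  assumes "\<And>a b. adj a b \<Longrightarrow> adj b a"
  shows "kappa V adj v w = kappa V adj w v"
proof (cases "v = w")
  case True then show ?thesis by simp
next
  case False
  have "kset V adj v w = kset V adj w v" using kset_rev[of adj, OF assms] by blast
  then show ?thesis using False kappa_eq by metis
qed

lemma kappa_nested:
  assumes fin: "finite V" and vV: "v \<in> V" and wV: "w \<in> V" and vw: "v \<noteq> w"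
    and sym: "\<And>a b. adj a b \<Longrightarrow> adj b a"
    and irr: "\<And>a. \<not> adj a a"
    and nest: "\<And>z. adj z w \<Longrightarrow> z \<noteq> v \<Longrightarrow> adj z v"
  shows "kappa V adj v w = enat (card (nbrs V adj w))"
proof -
  define A where "A = nbrs V adj w - {v}"
  define P where "P = (\<lambda>z. [v, z, w]) ` A \<union> (if adj v w then {[v, w]} else {})"
  have finA: "finite A" using fin by (simp add: A_def nbrs_def)
  have injA: "inj_on (\<lambda>z. [v, z, w]) A" by (auto intro: inj_onI)
  have cardP: "card P = card (nbrs V adj w)"
  proof (cases "adj v w")
    case True
    have "adj w v" using sym[OF True] .
    then have vin: "v \<in> nbrs V adj w" using vV by (simp add: nbrs_def)
    have "[v, w] \<notin> (\<lambda>z. [v, z, w]) ` A" by auto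
    then have "card P = card A + 1" using True finA injA by (simp add: P_def card_image)
    also have "\<dots> = card (nbrs V adj w)"
    proof -
      have finN: "finite (nbrs V adj w)" using fin by (simp add: nbrs_def)
      have "card A = card (nbrs V adj w) - 1" unfolding A_def using vin by (rule card_Diff_singleton)
      moreover have "card (nbrs V adj w) > 0" using finN vin card_gt_0_iff by blast
      ultimately show ?thesis by simp
    qed
    finally show ?thesis .
  next
    case False
    have "\<not> adj w v" using False sym[of w v] by blast
    then have vin: "v \<notin> nbrs V adj w" by (simp add: nbrs_def)
    then have "A = nbrs V adj w" by (auto simp: A_def)
    then show ?thesis using False injA by (simp add: P_def card_image)
  qed
  have finP: "finite P" using finA by (simp add: P_def)
  have D: "disjoint_path_family V adj v w P"
    unfolding disjoint_path_family_def
  proof (intro conjI ballI impI)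
    fix p assume "p \<in> P"
    then consider z where "z \<in> A" "p = [v, z, w]" | "adj v w" "p = [v, w]"
      by (auto simp: P_def split: if_splits)
    then show "is_path V adj v w p"
    proof cases
      case 1
      then have z: "z \<in> V" "adj w z" "z \<noteq> v" by (auto simp: A_def nbrs_def)
      have zw: "z \<noteq> w" using z irr by auto
      have "adj v z" using sym[OF nest[OF sym[OF z(2)] z(3)]] .
      have adjs: "\<forall>i. Suc i < length [v, z, w] \<longrightarrow> adj ([v, z, w] ! i) ([v, z, w] ! Suc i)"
      proof (intro allI impI)
        fix i assume "Suc i < length [v, z, w]"
        then have "i = 0 \<or> i = 1" by auto
        then show "adj ([v, z, w] ! i) ([v, z, w] ! Suc i)" using \<open>adj v z\<close> sym[OF z(2)] by auto
      qed
      have "distinct [v, z, w]" using z(3) zw vw by auto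
      then show ?thesis using 1 adjs z(1) vV wV unfolding is_path_def by simp
    next
      case 2
      have adjs: "\<forall>i. Suc i < length [v, w] \<longrightarrow> adj ([v, w] ! i) ([v, w] ! Suc i)"
        using 2 by simp
      then show ?thesis using 2 vw vV wV unfolding is_path_def by simp
    qed
  next
    fix p q assume pq: "p \<in> P" "q \<in> P" "p \<noteq> q"
    have ip: "interior [v, z, w] = {z}" for z by (simp add: interior_def)
    have iq: "interior [v, w] = {}" by (simp add: interior_def)
    have cp: "(\<exists>z. p = [v, z, w]) \<or> p = [v, w]" using pq(1) by (auto simp: P_def split: if_splits)
    have cq: "(\<exists>z. q = [v, z, w]) \<or> q = [v, w]" using pq(2) by (auto simp: P_def split: if_splits)
    show "interior p \<inter> interior q = {}"
      using cp cq pq(3) ip iq by auto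
  qed
  have ge: "enat (card P) \<le> kappa V adj v w" using kappa_ge[OF fin vw finP D] .
  have "kappa V adj v w = kappa V adj w v" by (rule kappa_sym[OF sym])
  also have "\<dots> \<le> enat (card (nbrs V adj w))" by (rule kappa_le[OF fin vw[symmetric]])
  finally have le: "kappa V adj v w \<le> enat (card (nbrs V adj w))" .
  show ?thesis using ge le cardP by simp
qed

lemma kset_auto:
  assumes inv: "\<And>a. s (s a) = a" and sV: "\<And>a. a \<in> V \<Longrightarrow> s a \<in> V"
    and sadj: "\<And>a b. adj (s a) (s b) = adj a b"
  shows "kset V adj v w \<subseteq> kset V adj (s v) (s w)"
proof
  have injs: "inj s" by (metis inv injI)
  have injm: "inj (map s)" using injs by (simp add: inj_mapI)
  fix c assume "c \<in> kset V adj v w"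
  then obtain P where P: "c = card P" "finite P" "disjoint_path_family V adj v w P"
    by (auto simp: kset_def)
  have intm: "interior (map s p) = s ` interior p" for p
    by (simp add: interior_def map_tl[symmetric] map_butlast[symmetric])
  have pth: "is_path V adj (s v) (s w) (map s p)" if "is_path V adj v w p" for p
    using that injs sV sadj by (auto simp: is_path_def hd_map last_map distinct_map inj_on_def)
  have "disjoint_path_family V adj (s v) (s w) (map s ` P)"
    unfolding disjoint_path_family_def
  proof (intro conjI ballI impI)
    fix p' assume "p' \<in> map s ` P"
    then show "is_path V adj (s v) (s w) p'" using pth P(3) by (auto simp: disjoint_path_family_def)
  next
    fix p' q' assume "p' \<in> map s ` P" "q' \<in> map s ` P" "p' \<noteq> q'"
    then obtain p q where "p \<in> P" "q \<in> P" "p' = map s p" "q' = map s q" "p \<noteq> q" by auto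
    then have "interior p \<inter> interior q = {}" using P(3) by (auto simp: disjoint_path_family_def)
    then show "interior p' \<inter> interior q' = {}"
      using \<open>p' = map s p\<close> \<open>q' = map s q\<close> injs by (auto simp: intm inj_def)
  qed
  moreover have "card (map s ` P) = c" using P injm by (simp add: card_image inj_on_def inj_def)
  ultimately show "c \<in> kset V adj (s v) (s w)" using P(2) unfolding kset_def by blast
qed

lemma kappa_auto:
  assumes inv: "\<And>a. s (s a) = a" and sV: "\<And>a. a \<in> V \<Longrightarrow> s a \<in> V"
    and sadj: "\<And>a b. adj (s a) (s b) = adj a b"
  shows "kappa V adj (s v) (s w) = kappa V adj v w"
proof (cases "v = w")
  case True then show ?thesis by (simp add: kappa_def)
next
  case False
  then have ne: "s v \<noteq> s w" by (metis inv)
  have "kset V adj v w \<subseteq> kset V adj (s v) (s w)" by (rule kset_auto[where s=s and V=V and adj=adj, OF assms])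
  moreover have "kset V adj (s v) (s w) \<subseteq> kset V adj v w"
    using kset_auto[where s=s and V=V and adj=adj, OF assms, of "s v" "s w"] inv by simp
  ultimately have "kset V adj v w = kset V adj (s v) (s w)" by blast
  then show ?thesis using False ne kappa_eq by metis
qed



definition TW :: "nat list \<Rightarrow> nat \<Rightarrow> nat \<Rightarrow> bool" where
  "TW ys a b \<longleftrightarrow> (\<forall>i. a \<le> i \<and> i \<le> b \<longrightarrow> ys ! i = ys ! a)"

definition sw :: "nat \<Rightarrow> nat \<Rightarrow> nat \<Rightarrow> nat" where
  "sw a b x = (if x = a then b else if x = b then a else x)"

lemma thr_sym: "thr_adj ys a b \<Longrightarrow> thr_adj ys b a"
  by (auto simp: thr_adj_def max.commute)

lemma thr_irr: "\<not> thr_adj ys a a"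
  by (simp add: thr_adj_def)

lemma thr_fin: "finite (thr_vertices ys)"
  by (simp add: thr_vertices_def)

lemma nbrs_thr: "nbrs (thr_vertices ys) (thr_adj ys) v = {z. z < length ys \<and> z \<noteq> v \<and> v < length ys \<and> ys ! (max v z) = 1}"
  by (auto simp: nbrs_def thr_vertices_def thr_adj_def)

lemma sw_inv: "sw a b (sw a b x) = x"
  by (simp add: sw_def)

lemma max_sw_aux:
  fixes f :: "nat \<Rightarrow> nat"
  assumes ab: "a < b" and T: "\<And>i. a \<le> i \<Longrightarrow> i \<le> b \<Longrightarrow> f i = f a" and y: "y \<noteq> a" "y \<noteq> b"
  shows "f (max b y) = f (max a y)"
proof -
  have fb: "f b = f a" using T[of b] ab by simp
  consider "y < a" | "a < y" "y < b" | "b < y" using y by linarith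
  then show ?thesis
  proof cases
    case 1
    then have "max b y = b" "max a y = a" using ab by auto
    then show ?thesis using fb by simp
  next
    case 2
    then have "max b y = b" "max a y = y" by auto
    then show ?thesis using fb T[of y] 2 by simp
  next
    case 3
    then have "max b y = y" "max a y = y" using ab by auto
    then show ?thesis by simp
  qed
qed

lemma sw_adj:
  assumes T: "TW ys a b" and ab: "a < b" "b < length ys"
  shows "thr_adj ys (sw a b x) (sw a b y) = thr_adj ys x y"
proof -
  have T': "\<And>i. a \<le> i \<Longrightarrow> i \<le> b \<Longrightarrow> ys ! i = ys ! a" using T unfolding TW_def by blast
  have aux: "\<And>z. z \<noteq> a \<Longrightarrow> z \<noteq> b \<Longrightarrow> ys ! (max b z) = ys ! (max a z)"
    by (rule max_sw_aux[where f="\<lambda>i. ys ! i", OF ab(1) T'])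
  have key: "x \<noteq> y \<Longrightarrow> ys ! (max (sw a b x) (sw a b y)) = ys ! (max x y)"
  proof -
    assume xy: "x \<noteq> y"
    consider "x = a" "y = b" | "x = b" "y = a" | "x = a" "y \<noteq> a" "y \<noteq> b" | "x = b" "y \<noteq> a" "y \<noteq> b"
      | "y = a" "x \<noteq> a" "x \<noteq> b" | "y = b" "x \<noteq> a" "x \<noteq> b" | "x \<noteq> a" "x \<noteq> b" "y \<noteq> a" "y \<noteq> b"
      using xy by auto
    then show ?thesis
    proof cases
      case 1 then show ?thesis by (simp add: sw_def max.commute)
    next
      case 2 then show ?thesis by (simp add: sw_def max.commute)
    next
      case 3
      then have "sw a b x = b" "sw a b y = y" by (auto simp: sw_def)
      then show ?thesis using aux[of y] 3 by simp
    next
      case 4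
      then have "sw a b x = a" "sw a b y = y" using ab by (auto simp: sw_def)
      then show ?thesis using aux[of y] 4 by simp
    next
      case 5
      then have "sw a b y = b" "sw a b x = x" by (auto simp: sw_def)
      then show ?thesis using aux[of x] 5 by (simp add: max.commute)
    next
      case 6
      then have "sw a b y = a" "sw a b x = x" using ab by (auto simp: sw_def)
      then show ?thesis using aux[of x] 6 by (simp add: max.commute)
    next
      case 7 then show ?thesis by (simp add: sw_def)
    qed
  qed
  have ne: "(sw a b x \<noteq> sw a b y) = (x \<noteq> y)" by (auto simp: sw_def)
  have lt: "\<And>z. (sw a b z < length ys) = (z < length ys)" using ab by (auto simp: sw_def)
  show ?thesis
  proof (cases "x = y")
    case True then show ?thesis by (simp add: thr_adj_def)
  next
    case False
    then show ?thesis using key[OF False] ne lt[of x] lt[of y] by (simp add: thr_adj_def)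
  qed
qed

lemma kappa_twin:
  assumes T: "TW ys a b" and ab: "a < b" "b < length ys" and w: "w \<noteq> a" "w \<noteq> b"
  shows "kappa (thr_vertices ys) (thr_adj ys) a w = kappa (thr_vertices ys) (thr_adj ys) b w"
proof -
  have "kappa (thr_vertices ys) (thr_adj ys) (sw a b a) (sw a b w) = kappa (thr_vertices ys) (thr_adj ys) a w"
  proof (rule kappa_auto)
    show "\<And>x. sw a b (sw a b x) = x" by (rule sw_inv)
    show "\<And>x. x \<in> thr_vertices ys \<Longrightarrow> sw a b x \<in> thr_vertices ys" using ab by (auto simp: sw_def thr_vertices_def)
    show "\<And>x y. thr_adj ys (sw a b x) (sw a b y) = thr_adj ys x y" by (rule sw_adj[OF T ab])
  qed
  moreover have "sw a b a = b" "sw a b w = w" using w by (auto simp: sw_def)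
  ultimately show ?thesis by simp
qed

lemma kappa_nested_thr:
  assumes "v < length ys" "w < length ys" "v \<noteq> w"
    and nest: "\<And>z. thr_adj ys z w \<Longrightarrow> z \<noteq> v \<Longrightarrow> thr_adj ys z v"
  shows "kappa (thr_vertices ys) (thr_adj ys) v w = enat (card (nbrs (thr_vertices ys) (thr_adj ys) w))"
proof (rule kappa_nested[where V="thr_vertices ys" and adj="thr_adj ys"])
  show "finite (thr_vertices ys)" by (rule thr_fin)
  show "v \<in> thr_vertices ys" "w \<in> thr_vertices ys" using assms by (auto simp: thr_vertices_def)
  show "v \<noteq> w" by fact
  show "\<And>a b. thr_adj ys a b \<Longrightarrow> thr_adj ys b a" by (rule thr_sym)
  show "\<And>a. \<not> thr_adj ys a a" by (rule thr_irr)
  show "\<And>z. thr_adj ys z w \<Longrightarrow> z \<noteq> v \<Longrightarrow> thr_adj ys z v" by (rule nest)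
qed

lemma kappa_univ:
  assumes t: "t = length ys - 1" "length ys > 0" "ys ! t = 1" and v: "v < length ys" "v \<noteq> t"
  shows "kappa (thr_vertices ys) (thr_adj ys) v t = enat (card (nbrs (thr_vertices ys) (thr_adj ys) v))"
proof -
  have "kappa (thr_vertices ys) (thr_adj ys) t v = enat (card (nbrs (thr_vertices ys) (thr_adj ys) v))"
  proof (rule kappa_nested_thr)
    show "t < length ys" using t by simp
    show "v < length ys" by fact
    show "t \<noteq> v" using v by simp
    fix z assume "thr_adj ys z v" "z \<noteq> t"
    then show "thr_adj ys z t" using t by (auto simp: thr_adj_def max_def)
  qed
  moreover have "kappa (thr_vertices ys) (thr_adj ys) v t = kappa (thr_vertices ys) (thr_adj ys) t v"
    by (rule kappa_sym[OF thr_sym])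
  ultimately show ?thesis by simp
qed



definition NB :: "nat list \<Rightarrow> nat \<Rightarrow> nat set" where
  "NB ys v = {z. z < length ys \<and> z \<noteq> v \<and> ys ! (max v z) = 1}"

lemma nbrs_NB: "v < length ys \<Longrightarrow> nbrs (thr_vertices ys) (thr_adj ys) v = NB ys v"
  by (auto simp: nbrs_thr NB_def)

lemma finite_NB: "finite (NB ys v)"
  by (simp add: NB_def)

lemma deg_neq:
  assumes bin: "\<forall>i<length ys. ys ! i \<le> 1" and h01: "ys ! 0 = ys ! 1"
    and v12: "v1 < v2" "v2 < length ys" and nT: "\<not> TW ys v1 v2"
  shows "card (NB ys v1) \<noteq> card (NB ys v2)"
proof -
  obtain i where i: "v1 \<le> i" "i \<le> v2" "ys ! i \<noteq> ys ! v1" using nT unfolding TW_def by blast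
  have iv1: "v1 < i" using i by (cases "i = v1") auto
  have n: "i < length ys" using i v12 by simp
  show ?thesis
  proof (cases "ys ! v2 = 1")
    case True
    define M where "M = insert v1 (NB ys v1 - {v2})"
    have v2in: "v2 \<in> NB ys v1" using True v12 by (simp add: NB_def max_def)
    have v1nin: "v1 \<notin> NB ys v1 - {v2}" by (simp add: NB_def)
    have cM: "card M = card (NB ys v1)"
    proof -
      have "card M = card (NB ys v1 - {v2}) + 1" unfolding M_def using v1nin finite_NB
        by (simp add: card_insert_if)
      moreover have "card (NB ys v1 - {v2}) = card (NB ys v1) - 1" using v2in by (rule card_Diff_singleton)
      moreover have "card (NB ys v1) > 0" using v2in finite_NB card_gt_0_iff by blast
      ultimately show ?thesis by simp
    qed
    have sub: "M \<subseteq> NB ys v2"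
    proof
      fix z assume "z \<in> M"
      then consider "z = v1" | "z \<in> NB ys v1" "z \<noteq> v2" unfolding M_def by blast
      then show "z \<in> NB ys v2"
      proof cases
        case 1 then show ?thesis using v12 True by (simp add: NB_def max_def)
      next
        case 2
        then have z: "z < length ys" "z \<noteq> v1" "ys ! (max v1 z) = 1" by (auto simp: NB_def)
        have "ys ! (max v2 z) = 1"
        proof (cases "z < v2")
          case True then show ?thesis using \<open>ys ! v2 = 1\<close> by (simp add: max_def)
        next
          case False
          then have "max v2 z = z" "max v1 z = z" using v12 by auto
          then show ?thesis using z(3) by simp
        qed
        then show ?thesis using z(1) 2(2) by (simp add: NB_def)
      qed
    qed
    obtain z where z: "z \<in> NB ys v2" "z \<notin> M"
    proof (cases "ys ! v1 = 1")
      case True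
      have "ys ! i \<noteq> 1" using i(3) True by simp
      then have "i \<noteq> v2" using \<open>ys ! v2 = 1\<close> by auto
      have "i \<in> NB ys v2" using n \<open>i \<noteq> v2\<close> i(2) \<open>ys ! v2 = 1\<close> by (simp add: NB_def max_def)
      moreover have "i \<notin> M" using iv1 \<open>ys ! i \<noteq> 1\<close> by (simp add: M_def NB_def max_def)
      ultimately show ?thesis using that by blast
    next
      case False
      show ?thesis
      proof (cases "v1 = 0")
        case True
        have "ys ! 1 \<noteq> 1" using False True h01 by simp
        then have "1 \<noteq> v2" using \<open>ys ! v2 = 1\<close> by auto
        then have "1 < v2" using v12 True by simp
        have "1 \<in> NB ys v2" using \<open>1 < v2\<close> v12 \<open>ys ! v2 = 1\<close> by (simp add: NB_def max_def)
        moreover have "1 \<notin> M" using True \<open>ys ! 1 \<noteq> 1\<close> \<open>1 < v2\<close> by (simp add: M_def NB_def max_def)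
        ultimately show ?thesis using that by blast
      next
        case v1: False
        have "max v2 (v1 - 1) = v2" using v12 by simp
        moreover have "v1 - 1 < length ys" "v1 - 1 \<noteq> v2" using v12 by linarith+
        ultimately have "v1 - 1 \<in> NB ys v2" using \<open>ys ! v2 = 1\<close> by (simp add: NB_def)
        moreover have "v1 - 1 \<notin> M"
        proof -
          have "max v1 (v1 - 1) = v1" by simp
          moreover have "v1 - 1 \<noteq> v1" using v1 by simp
          ultimately show ?thesis using False by (simp add: M_def NB_def)
        qed
        ultimately show ?thesis using that by blast
      qed
    qed
    have "M \<subset> NB ys v2" using sub z by blast
    then have "card M < card (NB ys v2)" using finite_NB by (rule psubset_card_mono[rotated])
    then show ?thesis using cM by simp
  next
    case False
    have sub: "NB ys v2 \<subseteq> NB ys v1"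
    proof
      fix z assume z: "z \<in> NB ys v2"
      then have zz: "z < length ys" "z \<noteq> v2" "ys ! (max v2 z) = 1" by (auto simp: NB_def)
      have "v2 < z"
      proof (rule ccontr)
        assume "\<not> v2 < z"
        then have "max v2 z = v2" by simp
        then show False using zz(3) False by simp
      qed
      then have "max v1 z = z" "max v2 z = z" using v12 by auto
      then show "z \<in> NB ys v1" using zz \<open>v2 < z\<close> v12 by (simp add: NB_def)
    qed
    obtain z where z: "z \<in> NB ys v1" "z \<notin> NB ys v2"
    proof (cases "ys ! v1 = 1")
      case False
      have "ys ! i = 1" using bin n v12 i(3) False
        by (metis le_antisym le_neq_implies_less less_one order.strict_trans)
      then have "i \<noteq> v2" using \<open>ys ! v2 \<noteq> 1\<close> by auto
      then have "i < v2" using i(2) by simp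
      have "i \<in> NB ys v1" using n iv1 \<open>ys ! i = 1\<close> by (simp add: NB_def max_def)
      moreover have "i \<notin> NB ys v2" using \<open>i < v2\<close> \<open>ys ! v2 \<noteq> 1\<close> by (simp add: NB_def max_def)
      ultimately show ?thesis using that by blast
    next
      case True
      show ?thesis
      proof (cases "v1 = 0")
        case v0: True
        have "ys ! 1 = 1" using True v0 h01 by simp
        then have "1 \<noteq> v2" using \<open>ys ! v2 \<noteq> 1\<close> by auto
        then have "1 < v2" using v12 v0 by simp
        have "1 \<in> NB ys v1" using \<open>1 < v2\<close> v12 v0 \<open>ys ! 1 = 1\<close> by (simp add: NB_def max_def)
        moreover have "1 \<notin> NB ys v2" using \<open>1 < v2\<close> \<open>ys ! v2 \<noteq> 1\<close> by (simp add: NB_def max_def)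
        ultimately show ?thesis using that by blast
      next
        case v1: False
        have m1: "max v1 (v1 - 1) = v1" "max v2 (v1 - 1) = v2" "v1 - 1 < length ys" "v1 - 1 \<noteq> v1"
          using v1 v12 by auto
        have "v1 - 1 \<in> NB ys v1" using m1 True by (simp add: NB_def)
        moreover have "v1 - 1 \<notin> NB ys v2" using m1 \<open>ys ! v2 \<noteq> 1\<close> by (simp add: NB_def)
        ultimately show ?thesis using that by blast
      qed
    qed
    have "NB ys v2 \<subset> NB ys v1" using sub z by blast
    then have "card (NB ys v2) < card (NB ys v1)" using finite_NB by (rule psubset_card_mono[rotated])
    then show ?thesis by simp
  qed
qed



definition SS :: "(nat \<Rightarrow> nat) \<Rightarrow> nat \<Rightarrow> nat" where
  "SS k j = (\<Sum>l=1..<j. k l)"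

lemma SS_Suc: "1 \<le> j \<Longrightarrow> SS k (Suc j) = SS k j + k j"
  by (simp add: SS_def)

lemma SS_1: "SS k 1 = 0" by (simp add: SS_def)

lemma SS_mono: "j \<le> j' \<Longrightarrow> SS k j \<le> SS k j'"
  unfolding SS_def by (rule sum_mono2) auto

lemma SS_strict:
  assumes "1 \<le> j" "j < j'" "k j > 0" shows "SS k j < SS k j'"
proof -
  have "SS k j < SS k (Suc j)" using SS_Suc[OF assms(1)] assms(3) by simp
  also have "\<dots> \<le> SS k j'" using assms(2) by (intro SS_mono) simp
  finally show ?thesis .
qed

lemma block_seq_Suc:
  "block_seq (Suc m) x k = block_seq m x k @ replicate (k (Suc m)) (x (Suc m))"
  by (simp add: block_seq_def)

lemma block_seq_length: "length (block_seq m x k) = SS k (Suc m)"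
proof (induction m)
  case 0 then show ?case by (simp add: block_seq_def SS_def)
next
  case (Suc m) then show ?case by (simp add: block_seq_Suc SS_Suc)
qed

lemma SS_sum: "SS k (Suc m) = (\<Sum>j=1..m. k j)"
  unfolding SS_def by (rule sum.cong) auto

lemma block_seq_nth:
  assumes "1 \<le> j" "j \<le> m" "SS k j \<le> i" "i < SS k (Suc j)"
  shows "block_seq m x k ! i = x j"
  using assms
proof (induction m)
  case 0 then show ?case by simp
next
  case (Suc m)
  show ?case
  proof (cases "j \<le> m")
    case True
    have "i < SS k (Suc m)" using Suc.prems(4) SS_mono[of "Suc j" "Suc m" k] True by simp
    then have "i < length (block_seq m x k)" by (simp add: block_seq_length)
    then have "block_seq (Suc m) x k ! i = block_seq m x k ! i" by (simp add: block_seq_Suc nth_append)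
    then show ?thesis using Suc.IH[OF Suc.prems(1) True Suc.prems(3,4)] by simp
  next
    case False
    then have j: "j = Suc m" using Suc.prems(2) by simp
    have "\<not> i < length (block_seq m x k)" using Suc.prems(3) j by (simp add: block_seq_length)
    moreover have "i - length (block_seq m x k) < k (Suc m)"
    proof -
      have "SS k (Suc m) \<le> i" "i < SS k (Suc m) + k (Suc m)"
        using Suc.prems(3,4) j SS_Suc[of "Suc m" k] by simp_all
      then show ?thesis by (simp add: block_seq_length less_diff_conv2 add.commute)
    qed
    ultimately show ?thesis using j by (simp add: block_seq_Suc nth_append)
  qed
qed

definition bl :: "(nat \<Rightarrow> nat) \<Rightarrow> nat \<Rightarrow> nat" where
  "bl k i = (LEAST j. i < SS k (Suc j))"

lemma bl_props:
  assumes "i < SS k (Suc m)"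
  shows "1 \<le> bl k i" "bl k i \<le> m" "SS k (bl k i) \<le> i" "i < SS k (Suc (bl k i))"
proof -
  show lt: "i < SS k (Suc (bl k i))" unfolding bl_def using assms by (rule LeastI)
  show "bl k i \<le> m" unfolding bl_def using assms by (rule Least_le)
  show "1 \<le> bl k i"
  proof (rule ccontr)
    assume "\<not> 1 \<le> bl k i"
    then have "bl k i = 0" by simp
    then show False using lt by (simp add: SS_def)
  qed
  then obtain j where j: "bl k i = Suc j" by (cases "bl k i") auto
  then have "\<not> i < SS k (Suc j)" unfolding bl_def using not_less_Least[of j "\<lambda>j. i < SS k (Suc j)"]
    by (metis lessI)
  then show "SS k (bl k i) \<le> i" using j by simp
qed



lemma rep_eq_all: "rep V adj v1 W = rep V adj v2 W \<Longrightarrow> w \<in> set W \<Longrightarrow> kappa V adj v1 w = kappa V adj v2 w"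
  by (simp add: rep_def map_eq_conv)

lemma resolving_upper:
  assumes bin: "\<forall>i<length ys. ys ! i \<le> 1" and h01: "ys ! 0 = ys ! 1"
    and np: "length ys > 0" and t1: "ys ! (length ys - 1) = 1"
    and R: "R \<subseteq> {..<length ys}" "length ys - 1 \<notin> R"
    and sep: "\<And>a b. a \<in> R \<Longrightarrow> b \<in> R \<Longrightarrow> a < b \<Longrightarrow> \<not> TW ys a b"
  shows "resolving (thr_vertices ys) (thr_adj ys) (sorted_list_of_set (thr_vertices ys - R))"
proof -
  define V where "V = thr_vertices ys"
  define W where "W = sorted_list_of_set (V - R)"
  define t where "t = length ys - 1"
  have fin: "finite V" by (simp add: V_def thr_vertices_def)
  have sW: "set W = V - R" using fin by (simp add: W_def)
  have tW: "t \<in> set W" using sW R np by (simp add: t_def V_def thr_vertices_def)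
  have "\<forall>v1\<in>V. \<forall>v2\<in>V. rep V (thr_adj ys) v1 W = rep V (thr_adj ys) v2 W \<longrightarrow> v1 = v2"
  proof (intro ballI impI)
    fix v1 v2 assume v: "v1 \<in> V" "v2 \<in> V" and eq: "rep V (thr_adj ys) v1 W = rep V (thr_adj ys) v2 W"
    show "v1 = v2"
    proof (rule ccontr)
      assume ne: "v1 \<noteq> v2"
      have c1: "v1 \<notin> set W"
      proof
        assume "v1 \<in> set W"
        then have "kappa V (thr_adj ys) v1 v1 = kappa V (thr_adj ys) v2 v1" using rep_eq_all[OF eq] by blast
        moreover have "kappa V (thr_adj ys) v1 v1 = \<infinity>" by (simp add: kappa_def)
        moreover have "kappa V (thr_adj ys) v2 v1 \<noteq> \<infinity>" using ne by (intro kappa_fin) simp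
        ultimately show False by simp
      qed
      have c2: "v2 \<notin> set W"
      proof
        assume "v2 \<in> set W"
        then have "kappa V (thr_adj ys) v1 v2 = kappa V (thr_adj ys) v2 v2" using rep_eq_all[OF eq] by blast
        moreover have "kappa V (thr_adj ys) v2 v2 = \<infinity>" by (simp add: kappa_def)
        moreover have "kappa V (thr_adj ys) v1 v2 \<noteq> \<infinity>" using ne by (intro kappa_fin) simp
        ultimately show False by simp
      qed
      have vR: "v1 \<in> R" "v2 \<in> R" using c1 c2 v sW by auto
      have vn: "v1 < length ys" "v2 < length ys" using v by (auto simp: V_def thr_vertices_def)
      have vt: "v1 \<noteq> t" "v2 \<noteq> t" using vR R by (auto simp: t_def)
      have k1: "kappa V (thr_adj ys) v1 t = enat (card (NB ys v1))"
        using kappa_univ[OF t_def np t1[folded t_def] vn(1) vt(1)] nbrs_NB[OF vn(1)] by (simp add: V_def)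
      have k2: "kappa V (thr_adj ys) v2 t = enat (card (NB ys v2))"
        using kappa_univ[OF t_def np t1[folded t_def] vn(2) vt(2)] nbrs_NB[OF vn(2)] by (simp add: V_def)
      have "kappa V (thr_adj ys) v1 t = kappa V (thr_adj ys) v2 t" using rep_eq_all[OF eq tW] .
      then have cc: "card (NB ys v1) = card (NB ys v2)" using k1 k2 by simp
      show False
      proof (cases "v1 < v2")
        case True
        then show False using deg_neq[OF bin h01 True vn(2) sep[OF vR True]] cc by simp
      next
        case False
        then have "v2 < v1" using ne by simp
        then show False using deg_neq[OF bin h01 \<open>v2 < v1\<close> vn(1) sep[OF vR(2) vR(1) \<open>v2 < v1\<close>]] cc by simp
      qed
    qed
  qed
  moreover have "set W \<subseteq> V" using sW by auto
  ultimately show ?thesis unfolding resolving_def W_def V_def by simp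
qed



locale blk =
  fixes m :: nat and x k :: "nat \<Rightarrow> nat"
  assumes m1: "m \<ge> 1"
    and xb: "\<forall>j\<in>{1..m}. x j \<in> {0, 1}"
    and xalt: "\<forall>j. 1 \<le> j \<and> j < m \<longrightarrow> x j \<noteq> x (Suc j)"
    and xm: "x m = 1"
    and kpos: "\<forall>j\<in>{1..m}. k j > 0"
    and k1: "k 1 \<ge> 2"
begin

abbreviation "ys \<equiv> block_seq m x k"

lemma n_eq: "length ys = SS k (Suc m)"
  by (rule block_seq_length)

lemma ys_nth: "1 \<le> j \<Longrightarrow> j \<le> m \<Longrightarrow> SS k j \<le> i \<Longrightarrow> i < SS k (Suc j) \<Longrightarrow> ys ! i = x j"
  by (rule block_seq_nth)

lemma ys_bl: "i < length ys \<Longrightarrow> ys ! i = x (bl k i)"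
  using bl_props[of i k m] n_eq ys_nth by simp

lemma bin: "\<forall>i<length ys. ys ! i \<le> 1"
proof (intro allI impI)
  fix i assume i: "i < length ys"
  have "bl k i \<in> {1..m}" using bl_props[of i k m] i n_eq by simp
  then have "x (bl k i) \<in> {0, 1}" using xb by blast
  then show "ys ! i \<le> 1" using ys_bl[OF i] by auto
qed

lemma SS2: "SS k 2 = k 1"
  using SS_Suc[of 1 k] SS_1 by (simp add: numeral_2_eq_2)

lemma h01: "ys ! 0 = ys ! 1"
proof -
  have "ys ! 0 = x 1" using ys_nth[of 1 0] m1 SS_1 SS2 k1 by (simp add: numeral_2_eq_2)
  moreover have "ys ! 1 = x 1" using ys_nth[of 1 1] m1 SS_1 SS2 k1 by (simp add: numeral_2_eq_2)
  ultimately show ?thesis by simp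
qed

lemma SSm: "SS k (Suc m) = SS k m + k m"
  using SS_Suc m1 by simp

lemma km: "k m > 0" using kpos m1 by simp

lemma n_pos: "length ys > 0" using n_eq SSm km by simp

lemma t1: "ys ! (length ys - 1) = 1"
proof -
  have "ys ! (length ys - 1) = x m"
    using ys_nth[of m "length ys - 1"] m1 n_eq SSm km by simp
  then show ?thesis using xm by simp
qed

lemma SS_inj: "inj_on (SS k) {1..m}"
proof (rule inj_onI)
  fix a b assume ab: "a \<in> {1..m}" "b \<in> {1..m}" "SS k a = SS k b"
  show "a = b"
  proof (rule ccontr)
    assume "a \<noteq> b"
    then consider "a < b" | "b < a" by linarith
    then show False
    proof cases
      case 1 then show False using SS_strict[of a b k] ab kpos by auto
    next
      case 2 then show False using SS_strict[of b a k] ab kpos by auto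
    qed
  qed
qed

lemma SS_lt_n: "j \<in> {1..m} \<Longrightarrow> SS k j < length ys"
proof -
  assume j: "j \<in> {1..m}"
  have "SS k j < SS k (Suc j)" using SS_Suc[of j k] j kpos by auto
  also have "\<dots> \<le> SS k (Suc m)" using j by (intro SS_mono) simp
  finally show ?thesis using n_eq by simp
qed

lemma sep: "i \<in> {1..m} \<Longrightarrow> j \<in> {1..m} \<Longrightarrow> i < j \<Longrightarrow> \<not> TW ys (SS k i) (SS k j)"
proof
  assume i: "i \<in> {1..m}" and j: "j \<in> {1..m}" and ij: "i < j" and T: "TW ys (SS k i) (SS k j)"
  have a: "SS k i \<le> SS k (Suc i)" by (intro SS_mono) simp
  have b: "SS k (Suc i) \<le> SS k j" using ij by (intro SS_mono) simp
  have "ys ! (SS k (Suc i)) = ys ! (SS k i)" using T a b unfolding TW_def by blast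
  moreover have "ys ! (SS k i) = x i"
    using ys_nth[of i "SS k i"] i SS_Suc[of i k] kpos by auto
  moreover have "ys ! (SS k (Suc i)) = x (Suc i)"
    using ys_nth[of "Suc i" "SS k (Suc i)"] i j ij SS_Suc[of "Suc i" k] kpos by auto
  moreover have "x i \<noteq> x (Suc i)" using xalt i j ij by auto
  ultimately show False by simp
qed

lemma n_ge_m: "m \<le> length ys"
proof -
  have "(\<Sum>j=1..m. (1::nat)) \<le> (\<Sum>j=1..m. k j)" using kpos by (intro sum_mono) (simp add: Suc_le_eq)
  then show ?thesis using n_eq SS_sum by simp
qed

lemma same_blk: "u < u' \<Longrightarrow> u' < length ys \<Longrightarrow> bl k u = bl k u' \<Longrightarrow> TW ys u u'"
  unfolding TW_def
proof (intro allI impI)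
  fix i assume uu: "u < u'" "u' < length ys" "bl k u = bl k u'" and i: "u \<le> i \<and> i \<le> u'"
  have bu: "1 \<le> bl k u" "bl k u \<le> m" "SS k (bl k u) \<le> u" "u < SS k (Suc (bl k u))"
    using bl_props[of u k m] uu n_eq by auto
  have bu': "u' < SS k (Suc (bl k u'))" using bl_props[of u' k m] uu n_eq by auto
  have "ys ! i = x (bl k u)" using ys_nth[OF bu(1,2)] bu(3) bu' uu(3) i by simp
  moreover have "ys ! u = x (bl k u)" using ys_nth[OF bu(1,2) bu(3,4)] .
  ultimately show "ys ! i = ys ! u" by simp
qed

end



context blk begin

lemma card_out:
  assumes W: "set W \<subseteq> thr_vertices ys"
  shows "length ys - card (thr_vertices ys - set W) = card (set W)"
proof -
  have "card (thr_vertices ys - set W) = card (thr_vertices ys) - card (set W)"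
    using W by (intro card_Diff_subset) auto
  moreover have "card (thr_vertices ys) = length ys" by (simp add: thr_vertices_def)
  moreover have "card (set W) \<le> length ys" using W card_mono[OF thr_fin W] by (simp add: thr_vertices_def)
  ultimately show ?thesis by simp
qed

lemma twins_out:
  assumes res: "resolving (thr_vertices ys) (thr_adj ys) W"
  shows "inj_on (bl k) (thr_vertices ys - set W)"
proof -
  have key: "u = u'" if u: "u \<in> thr_vertices ys - set W" "u' \<in> thr_vertices ys - set W"
     "bl k u = bl k u'" "u < u'" for u u'
  proof -
    have n: "u < length ys" "u' < length ys" using u by (auto simp: thr_vertices_def)
    have T: "TW ys u u'" using same_blk[OF u(4) n(2) u(3)] .
    have "rep (thr_vertices ys) (thr_adj ys) u W = rep (thr_vertices ys) (thr_adj ys) u' W"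
      unfolding rep_def
    proof (rule map_cong[OF refl])
      fix w assume "w \<in> set W"
      then have "w \<noteq> u" "w \<noteq> u'" using u by auto
      then show "kappa (thr_vertices ys) (thr_adj ys) u w = kappa (thr_vertices ys) (thr_adj ys) u' w"
        using kappa_twin[OF T u(4) n(2)] by simp
    qed
    then show "u = u'" using res u(1,2) unfolding resolving_def by blast
  qed
  show ?thesis
  proof (rule inj_onI)
    fix u u' assume "u \<in> thr_vertices ys - set W" "u' \<in> thr_vertices ys - set W" "bl k u = bl k u'"
    then show "u = u'" using key[of u u'] key[of u' u] by (cases "u < u'"; cases "u' < u") auto
  qed
qed

lemma bl_range: "v \<in> thr_vertices ys \<Longrightarrow> bl k v \<in> {1..m}"
  using bl_props[of v k m] n_eq by (simp add: thr_vertices_def)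

lemma lower:
  assumes res: "resolving (thr_vertices ys) (thr_adj ys) W" and d: "distinct W"
  shows "length ys - m \<le> length W"
proof -
  have W: "set W \<subseteq> thr_vertices ys" using res by (simp add: resolving_def)
  have "card (thr_vertices ys - set W) \<le> card {1..m}"
    using card_inj_on_le[OF twins_out[OF res] _ finite_atLeastAtMost] bl_range by blast
  then have "card (thr_vertices ys - set W) \<le> m" by simp
  then show ?thesis using card_out[OF W] distinct_card[OF d] by simp
qed

lemma m2: "k m = 1 \<Longrightarrow> m \<ge> 2"
  using k1 m1 by (cases "m = 1") auto

lemma t_eq: "k m = 1 \<Longrightarrow> length ys - 1 = SS k m"
  using n_eq SSm by simp

lemma xbin: "j \<in> {1..m} \<Longrightarrow> x j \<noteq> 1 \<Longrightarrow> x j = 0"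
  using xb by auto

lemma nest_lemma:
  assumes km1: "k m = 1" and b: "b = (if m = 2 then 1 else m - 2)"
    and u: "SS k b \<le> u" "u < SS k (Suc b)"
    and w: "w < length ys" "w \<noteq> u" "w \<noteq> length ys - 1"
    and zw: "thr_adj ys z w" and zu: "z \<noteq> u"
  shows "thr_adj ys z u"
proof -
  have mm: "m \<ge> 2" using m2[OF km1] .
  have te: "length ys - 1 = SS k m" using t_eq[OF km1] .
  have nt: "length ys = SS k m + 1" using n_eq SSm km1 by simp
  have zw': "z \<noteq> w" "z < length ys" "ys ! (max z w) = 1" using zw by (auto simp: thr_adj_def)
  show ?thesis
  proof (cases "m = 2")
    case True
    then have b1: "b = 1" using b by simp
    have "x 1 \<noteq> x (Suc 1)" using xalt[rule_format, of 1] True by simp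
    moreover have "x (Suc 1) = 1" using xm True by (simp add: numeral_2_eq_2)
    ultimately have x1: "x 1 = 0" using xbin[of 1] True by simp
    have low: "ys ! i = 0" if "i < length ys - 1" for i
    proof -
      have "i < SS k 2" using that te True by simp
      then show ?thesis using ys_nth[of 1 i] SS_1 True x1 by (simp add: numeral_2_eq_2)
    qed
    have "max z w = length ys - 1"
    proof (rule ccontr)
      assume "max z w \<noteq> length ys - 1"
      then have "max z w < length ys - 1" using zw' w(1) by auto
      then show False using low zw'(3) by fastforce
    qed
    then have zt: "z = length ys - 1" using w(3) by (auto simp: max_def split: if_splits)
    have "u < SS k m" using u b1 True SS2 by (simp add: numeral_2_eq_2)
    then have "u < length ys - 1" using te by simp
    then show ?thesis using zt t1 by (auto simp: thr_adj_def max_def)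
  next
    case False
    then obtain p where p: "m = Suc (Suc p)" "p \<ge> 1" using mm m1
      by (metis Suc_1 Suc_diff_Suc add_diff_inverse_nat le_Suc_ex le_neq_implies_less less_one nat_le_linear not_less_eq_eq numeral_2_eq_2 plus_1_eq_Suc)
    have bp: "b = p" using b p False by simp
    have xs: "x (Suc p) = 0" using xalt[rule_format, of "Suc p"] xm p xbin[of "Suc p"] by auto
    have "x p \<noteq> 0" using xalt[rule_format, of p] xs p by simp
    moreover have "x p \<in> {0, 1}" using xb p by simp
    ultimately have xp: "x p = 1" by simp
    have ones: "ys ! i = 1" if "SS k p \<le> i" "i < SS k (Suc p)" for i
      using ys_nth[of p i] that p xp by simp
    have zeros: "ys ! i = 0" if "SS k (Suc p) \<le> i" "i < SS k m" for i
      using ys_nth[of "Suc p" i] that p xs by simp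
    have un: "u < length ys" using u bp SS_mono[of "Suc p" m k] p nt by simp
    have yu: "ys ! u = 1" using ones u bp by simp
    have "ys ! (max z u) = 1"
    proof (cases "z < u")
      case True then show ?thesis using yu by (simp add: max_def)
    next
      case False
      then have zu': "u < z" using zu by simp
      then have mx: "max z u = z" by simp
      show ?thesis
      proof (cases "z = length ys - 1")
        case True then show ?thesis using mx t1 by simp
      next
        case zt: False
        then have zl: "z < SS k m" using zw'(2) te by simp
        show ?thesis
        proof (cases "z < SS k (Suc p)")
          case True then show ?thesis using ones[of z] mx zu' u bp by simp
        next
          case False
          then have z0: "ys ! z = 0" using zeros zl by simp
          have "z < w"
          proof (rule ccontr)
            assume "\<not> z < w"
            then have "max z w = z" by simp
            then show False using zw'(3) z0 by simp
          qed
          moreover have "w < SS k m" using w(1) w(3) te by simp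
          ultimately have "ys ! w = 0" using zeros False by simp
          moreover have "max z w = w" using \<open>z < w\<close> by simp
          ultimately show ?thesis using zw'(3) by simp
        qed
      qed
    qed
    then show ?thesis using zu zw'(2) un by (simp add: thr_adj_def)
  qed
qed

lemma lower1:
  assumes km1: "k m = 1" and res: "resolving (thr_vertices ys) (thr_adj ys) W" and d: "distinct W"
  shows "length ys - m + 1 \<le> length W"
proof -
  define V where "V = thr_vertices ys"
  define Ou where "Ou = V - set W"
  define t where "t = length ys - 1"
  define b where "b = (if m = 2 then 1 else m - 2)"
  have mm: "m \<ge> 2" using m2[OF km1] .
  have bm: "b \<in> {1..m}" "b \<noteq> m" using mm by (auto simp: b_def)
  have W: "set W \<subseteq> V" using res by (simp add: resolving_def V_def)
  have te: "t = SS k m" using t_eq[OF km1] by (simp add: t_def)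
  have np: "length ys > 0" by (rule n_pos)
  have claim: "bl k u \<noteq> b" if tW: "t \<notin> set W" and uO: "u \<in> Ou" for u
  proof
    assume ub: "bl k u = b"
    have un: "u < length ys" using uO by (auto simp: Ou_def V_def thr_vertices_def)
    have ul: "SS k b \<le> u" "u < SS k (Suc b)" using bl_props[of u k m] un n_eq ub by auto
    have "SS k (Suc b) \<le> SS k m" using bm by (intro SS_mono) simp
    then have ut: "u < t" using ul te by simp
    have "rep V (thr_adj ys) u W = rep V (thr_adj ys) t W"
      unfolding rep_def
    proof (rule map_cong[OF refl])
      fix w assume wW: "w \<in> set W"
      have wn: "w < length ys" using wW W by (auto simp: V_def thr_vertices_def)
      have wu: "w \<noteq> u" using wW uO by (auto simp: Ou_def)
      have wt: "w \<noteq> t" using wW tW by auto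
      have "kappa V (thr_adj ys) u w = enat (card (nbrs V (thr_adj ys) w))"
        unfolding V_def
      proof (rule kappa_nested_thr)
        show "u < length ys" "w < length ys" "u \<noteq> w" using un wn wu by auto
        fix z assume "thr_adj ys z w" "z \<noteq> u"
        then show "thr_adj ys z u"
          using nest_lemma[OF km1 b_def ul wn wu wt[unfolded t_def]] by blast
      qed
      moreover have "kappa V (thr_adj ys) w t = enat (card (nbrs V (thr_adj ys) w))"
        unfolding V_def by (rule kappa_univ[OF t_def np t1[folded t_def] wn wt])
      moreover have "kappa V (thr_adj ys) t w = kappa V (thr_adj ys) w t"
        by (rule kappa_sym[OF thr_sym])
      ultimately show "kappa V (thr_adj ys) u w = kappa V (thr_adj ys) t w" by simp
    qed
    moreover have "u \<in> V" "t \<in> V" using un np by (auto simp: V_def thr_vertices_def t_def)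
    ultimately have "u = t" using res unfolding resolving_def V_def by blast
    then show False using ut by simp
  qed
  define c where "c = (if t \<in> set W then m else b)"
  have cm: "c \<in> {1..m}" using bm m1 by (auto simp: c_def)
  have img: "bl k ` Ou \<subseteq> {1..m} - {c}"
  proof
    fix j assume "j \<in> bl k ` Ou"
    then obtain v where v: "v \<in> Ou" "j = bl k v" by blast
    have vV: "v \<in> V" using v by (simp add: Ou_def)
    have jr: "j \<in> {1..m}" using bl_range vV v by (simp add: V_def)
    have "j \<noteq> c"
    proof (cases "t \<in> set W")
      case True
      show ?thesis
      proof
        assume "j = c"
        then have "bl k v = m" using True v by (simp add: c_def)
        moreover have "v < length ys" using vV by (simp add: V_def thr_vertices_def)
        ultimately have "SS k m \<le> v" "v < SS k (Suc m)" using bl_props[of v k m] n_eq by auto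
        then have "v = t" using te SSm km1 by simp
        then show False using True v by (simp add: Ou_def)
      qed
    next
      case False
      then show ?thesis using claim[OF False v(1)] v by (simp add: c_def)
    qed
    then show "j \<in> {1..m} - {c}" using jr by simp
  qed
  have inj: "inj_on (bl k) Ou" using twins_out[OF res] by (simp add: Ou_def V_def)
  have "card Ou \<le> card ({1..m} - {c})"
    using card_inj_on_le[OF inj img] by simp
  also have "\<dots> = m - 1" using cm by simp
  finally have "card Ou \<le> m - 1" .
  moreover have "length ys - card Ou = card (set W)" using card_out[of W] W by (simp add: Ou_def V_def)
  moreover have "m \<le> length ys" by (rule n_ge_m)
  ultimately show ?thesis using distinct_card[OF d] m1 by simp
qed

end



context blk begin

lemma upper_gen:
  assumes J: "J \<subseteq> {1..m}" and tR: "length ys - 1 \<notin> SS k ` J"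
  shows "\<exists>W. distinct W \<and> length W = length ys - card J \<and> resolving (thr_vertices ys) (thr_adj ys) W"
proof -
  define R where "R = SS k ` J"
  have Rn: "R \<subseteq> {..<length ys}" using SS_lt_n J by (auto simp: R_def)
  have cR: "card R = card J" unfolding R_def using inj_on_subset[OF SS_inj J] by (rule card_image)
  have sepR: "\<not> TW ys a b" if ab: "a \<in> R" "b \<in> R" "a < b" for a b
  proof -
    obtain i j where ij: "i \<in> J" "j \<in> J" "a = SS k i" "b = SS k j" using ab by (auto simp: R_def)
    have "i < j"
    proof (rule ccontr)
      assume "\<not> i < j"
      then have "SS k j \<le> SS k i" by (intro SS_mono) simp
      then show False using ab ij by simp
    qed
    moreover have "i \<in> {1..m}" "j \<in> {1..m}" using ij J by auto
    ultimately show ?thesis using sep[of i j] ij by simp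
  qed
  define W where "W = sorted_list_of_set (thr_vertices ys - R)"
  have res: "resolving (thr_vertices ys) (thr_adj ys) W"
    unfolding W_def
    by (rule resolving_upper[OF bin h01 n_pos t1 Rn tR[folded R_def] sepR])
  have d: "distinct W" by (simp add: W_def)
  have "length W = card (thr_vertices ys - R)" by (simp add: W_def thr_fin)
  also have "\<dots> = card (thr_vertices ys) - card R"
    using Rn by (intro card_Diff_subset) (auto simp: thr_vertices_def intro: finite_subset)
  also have "\<dots> = length ys - card J" using cR by (simp add: thr_vertices_def)
  finally show ?thesis using res d by blast
qed

lemma upper2:
  assumes "k m \<ge> 2"
  shows "\<exists>W. distinct W \<and> length W = length ys - m \<and> resolving (thr_vertices ys) (thr_adj ys) W"
proof -
  have "length ys - 1 \<notin> SS k ` {1..m}"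
  proof
    assume "length ys - 1 \<in> SS k ` {1..m}"
    then obtain j where j: "j \<in> {1..m}" "length ys - 1 = SS k j" by blast
    have "SS k j \<le> SS k m" using j by (intro SS_mono) simp
    then show False using j assms n_eq SSm by simp
  qed
  then show ?thesis using upper_gen[of "{1..m}"] by simp
qed

lemma upper1:
  assumes km1: "k m = 1"
  shows "\<exists>W. distinct W \<and> length W = length ys - m + 1 \<and> resolving (thr_vertices ys) (thr_adj ys) W"
proof -
  have "length ys - 1 \<notin> SS k ` {1..m-1}"
  proof
    assume "length ys - 1 \<in> SS k ` {1..m-1}"
    then obtain j where j: "j \<in> {1..m-1}" "length ys - 1 = SS k j" by blast
    have "SS k j < SS k m" using j kpos by (intro SS_strict) auto
    then show False using j t_eq[OF km1] by simp
  qed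
  moreover have "length ys - card {1..m-1} = length ys - m + 1" using n_ge_m m2[OF km1] by simp
  ultimately show ?thesis using upper_gen[of "{1..m-1}"] by auto
qed

lemma cdim_val:
  "cdim (thr_vertices ys) (thr_adj ys) = (if k m > 1 then length ys - m else length ys - m + 1)"
proof (cases "k m > 1")
  case True
  have "cdim (thr_vertices ys) (thr_adj ys) = length ys - m"
    unfolding cdim_def
  proof (rule Least_equality)
    show "\<exists>W. distinct W \<and> length W = length ys - m \<and> resolving (thr_vertices ys) (thr_adj ys) W"
      using upper2 True by simp
    fix c assume "\<exists>W. distinct W \<and> length W = c \<and> resolving (thr_vertices ys) (thr_adj ys) W"
    then show "length ys - m \<le> c" using lower by blast
  qed
  then show ?thesis using True by simp
next
  case False
  then have km1: "k m = 1" using km by simp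
  have "cdim (thr_vertices ys) (thr_adj ys) = length ys - m + 1"
    unfolding cdim_def
  proof (rule Least_equality)
    show "\<exists>W. distinct W \<and> length W = length ys - m + 1 \<and> resolving (thr_vertices ys) (thr_adj ys) W"
      using upper1[OF km1] by simp
    fix c assume "\<exists>W. distinct W \<and> length W = c \<and> resolving (thr_vertices ys) (thr_adj ys) W"
    then show "length ys - m + 1 \<le> c" using lower1[OF km1] by blast
  qed
  then show ?thesis using False by simp
qed

end

theorem mainTheorem5:
  fixes m :: nat and x k :: "nat \<Rightarrow> nat"
  assumes "m \<ge> 1"
    and "\<forall>j\<in>{1..m}. x j \<in> {0, 1}"
    and "\<forall>j. 1 \<le> j \<and> j < m \<longrightarrow> x j \<noteq> x (Suc j)"
    and "x m = 1"
    and "\<forall>j\<in>{1..m}. k j > 0"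
    and "k 1 \<ge> 2"
  shows "let ys = block_seq m x k; n = (\<Sum>j=1..m. k j) in
    cdim (thr_vertices ys) (thr_adj ys) = (if k m > 1 then n - m else n - m + 1)"
proof -
  interpret blk m x k using assms by unfold_locales
  have "length (block_seq m x k) = (\<Sum>j=1..m. k j)" using n_eq SS_sum by simp
  then show ?thesis using cdim_val by (simp add: Let_def)
qed

end
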